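(* Let $a,b,C\in\mathbb{R}$ with $b>1$, $C>0$, and let $(W_k)_{k\ge1}$ be real numbers with $|W_k|<\frac{C\log^a(2k+1)}{k^b}$ for all $k\in\mathbb{N}$. Then $$\lim_{n\to\infty}\sum_{k=1}^{n}|W_k|\left(\frac{2}{\pi}-\frac{n}{2^{4n-2}}\binom{2n}{n}\binom{2n-1}{n-k}\right)=0.$$ *)

theory Defs
  imports "HOL-Analysis.Analysis"
begin

end

theory Submission
  imports Defs "HOL-Real_Asymp.Real_Asymp"
begin

lemma l1: "((2*Suc n) choose Suc n) * (n+1) = ((2*n) choose n) * 2 * (2*n+1)"
proof -
  have a: "Suc (Suc (2*n)) * (Suc (2*n) choose n) = (Suc (Suc (2*n)) choose Suc n) * Suc n"
    by (rule Suc_times_binomial_eq)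
  have b: "Suc (2*n) * (2*n choose n) = (Suc (2*n) choose Suc n) * Suc n"
    by (rule Suc_times_binomial_eq)
  have s: "(Suc (2*n) choose Suc n) = (Suc (2*n) choose n)"
    using binomial_symmetric[of n "Suc (2*n)"] by simp
  have e: "2*Suc n = Suc (Suc (2*n))" by simp
  define X where "X = (Suc (Suc (2*n)) choose Suc n)"
  define Y where "Y = (Suc (2*n) choose n)"
  define Z where "Z = (2*n choose n)"
  have a': "Suc (Suc (2*n)) * Y = X * Suc n" using a unfolding X_def Y_def .
  have b': "Suc (2*n) * Z = Y * Suc n" using b s unfolding Y_def Z_def by simp
  have "X * (n+1) * (n+1) = Z * 2 * (2*n+1) * (n+1)"
  proof -
    have "X * (n+1) * (n+1) = Suc (Suc (2*n)) * Y * (n+1)" using a' by simp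
    also have "\<dots> = Suc (Suc (2*n)) * (Suc (2*n) * Z)" using b' by (simp add: algebra_simps)
    finally show ?thesis by (simp add: algebra_simps)
  qed
  then have "X * (n+1) = Z * 2 * (2*n+1)" using mult_right_cancel[of "n+1" "X*(n+1)" "Z*2*(2*n+1)"] by simp
  then show ?thesis unfolding e X_def Z_def .
qed

lemma l2: "n \<ge> 1 \<Longrightarrow> 2 * ((2*n-1) choose (n-1)) = (2*n) choose n"
  by (smt (verit) ab_semigroup_mult_class.mult_ac(1) binomial_eq_0_iff
    choose_one linorder_not_less mult.commute mult_cancel1
    times_binomial_minus1_eq zero_less_binomial_iff)

lemma l3: "(m choose i) * (m - i) = (m choose Suc i) * Suc i"
  by (metis binomial_absorb_comp binomial_absorption mult.commute)

lemma aux0: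
  fixes x1 u1 w1 p1 s1 :: real assumes "x1 \<noteq> 0" "u1 \<noteq> 0" "w1 \<noteq> 0" "p1 \<noteq> 0"
  shows "s1/(x1^2*u1) * (4*p1^2/(u1*w1)) = 16 * s1/((x1*2*u1/p1)^2*w1)"
  using assms by (simp add: field_simps power2_eq_square)
lemma aux1:
  fixes x m s :: real assumes "x > 0" "m \<ge> 0"
  shows "s/(x^2*(2*m+1)) * (4*(m+1)^2/(4*(m+1)^2-1)) = 16 * s/((x*2*(2*m+1)/(m+1))^2*(2*m+3))"
proof -
  have e: "4*(m+1)^2-1 = (2*m+1)*(2*m+3)" by (simp add: power2_eq_square algebra_simps)
  have n: "x \<noteq> 0" "2*m+1 \<noteq> 0" "2*m+3 \<noteq> 0" "m+1 \<noteq> 0" using assms by auto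
  show ?thesis unfolding e by (rule aux0[OF n])
qed
lemma aux2: "(y::real) \<noteq> 0 \<Longrightarrow> (a/y) * (b*y/s) = a*b/s"
  by (cases "s = 0") (simp_all add: field_simps)

lemma aux3: "(k::nat) \<ge> 1 \<Longrightarrow> 1 \<le> (4*real k^2) / (4*real k^2 - 1)"
proof -
  assume "k \<ge> 1"
  then have "real k \<ge> 1" by simp
  then have "real k ^ 2 \<ge> 1" by (rule one_le_power)
  then show ?thesis by (simp add: le_divide_eq)
qed

lemma wallis_prod_eq:
  "(\<Prod>k=1..n. (4*real k^2) / (4*real k^2 - 1)) = 16^n / (real ((2*n) choose n)^2 * (2*n+1))"
proof (induction n)
  case 0 then show ?case by simp
next
  case (Suc n)
  have c: "real ((2*Suc n) choose Suc n) = real ((2*n) choose n) * 2 * (2*real n+1) / (real n+1)"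
  proof -
    have "real ((2*Suc n) choose Suc n) * (n+1) = real ((2*n) choose n) * 2 * (2*n+1)"
      using l1[of n] by (metis of_nat_1 of_nat_add of_nat_mult of_nat_numeral)
    then have "real ((2*Suc n) choose Suc n) * (real n+1) = real ((2*n) choose n) * 2 * (2*real n+1)"
      by (simp only: of_nat_add of_nat_mult of_nat_1 of_nat_numeral)
    moreover have "real n + 1 \<noteq> 0" by linarith
    ultimately show ?thesis by (simp add: eq_divide_eq)
  qed
  have pos: "real ((2*n) choose n) > 0" by simp
  have "(\<Prod>k=1..Suc n. (4*real k^2) / (4*real k^2 - 1)) =
     16^n / (real ((2*n) choose n)^2 * (2*n+1)) * ((4*real (Suc n)^2) / (4*real (Suc n)^2 - 1))"
    by (simp only: prod.cl_ivl_Suc Suc.IH) simp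
  also have "\<dots> = 16^Suc n / (real ((2*Suc n) choose Suc n)^2 * (2*Suc n+1))"
  proof -
    have e1: "real (2*n+1) = 2*real n+1" "real (2*Suc n+1) = 2*real n+3" "real (Suc n) = real n+1"
      by simp_all
    show ?thesis unfolding e1 c power_Suc by (rule aux1[OF pos]) simp
  qed
  finally show ?case .
qed

lemma wallis_prod_ge1: "(\<Prod>k=1..n. (4*real k^2) / (4*real k^2 - 1)) \<ge> 1"
  by (rule prod_ge_1) (auto intro: aux3)

definition Q :: "nat \<Rightarrow> real" where
  "Q n = real ((2*n) choose n)^2 * (2*n+1) / 16^n"

lemma Q_lim: "Q \<longlonglongrightarrow> 2 / pi"
proof -
  have "(\<lambda>n. inverse (\<Prod>k=1..n. (4*real k^2) / (4*real k^2 - 1))) \<longlonglongrightarrow> inverse (pi/2)"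
    by (rule tendsto_inverse[OF wallis]) simp
  moreover have "(\<lambda>n. inverse (\<Prod>k=1..n. (4*real k^2) / (4*real k^2 - 1))) = Q"
    by (rule ext) (unfold wallis_prod_eq, simp add: Q_def)
  ultimately show ?thesis by simp
qed

lemma Q_le1: "Q n \<le> 1"
proof -
  have "Q n = inverse (\<Prod>k=1..n. (4*real k^2) / (4*real k^2 - 1))"
    unfolding wallis_prod_eq by (simp add: Q_def)
  then show ?thesis using wallis_prod_ge1[of n]
    by (simp add: inverse_le_1_iff)
qed

definition D :: "nat \<Rightarrow> real" where
  "D n = real n / 2 ^ (4 * n - 2) * real ((2 * n) choose n) * real ((2 * n - 1) choose (n - 1))"

lemma D_eq: "n \<ge> 1 \<Longrightarrow> D n = (2*real n / (2*n+1)) * Q n"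
proof -
  assume n: "n \<ge> 1"
  have c: "real ((2 * n - 1) choose (n - 1)) = real ((2*n) choose n) / 2"
    using l2[OF n] by (metis nonzero_mult_div_cancel_left of_nat_mult of_nat_numeral zero_neq_numeral)
  have p: "(2::real) ^ (4 * n - 2) = 16^n / 4"
  proof -
    have "(2::real) ^ (4 * n - 2) * 4 = 2 ^ (4*n - 2 + 2)" by (simp add: power_add)
    also have "4*n - 2 + 2 = 4*n" using n by simp
    also have "(2::real) ^ (4*n) = 16^n" by (simp add: power_mult)
    finally show ?thesis by simp
  qed
  have "D n = 2 * real n * real ((2*n) choose n)^2 / 16^n"
    unfolding D_def c p by (simp add: field_simps power2_eq_square)
  moreover have "(2*real n / (2*n+1)) * Q n = 2 * real n * real ((2*n) choose n)^2 / 16^n"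
  proof -
    have "real (2*n+1) > 0" by simp
    then show ?thesis unfolding Q_def by (intro aux2) simp
  qed
  ultimately show ?thesis by simp
qed

lemma D_lim: "D \<longlonglongrightarrow> 2 / pi"
proof -
  have "(\<lambda>n. (2*real n / (2*n+1)) * Q n) \<longlonglongrightarrow> 1 * (2/pi)"
    by (intro tendsto_mult Q_lim) real_asymp
  then have "(\<lambda>n. (2*real n / (2*n+1)) * Q n) \<longlonglongrightarrow> 2/pi" by simp
  then show ?thesis
  proof (rule Lim_transform_eventually)
    show "\<forall>\<^sub>F n in sequentially. (2*real n / (2*n+1)) * Q n = D n"
      using eventually_ge_at_top[of "1::nat"]
    proof eventually_elim
      case (elim n) then show ?case by (simp add: D_eq)
    qed
  qed
qed

lemma D_le1: "D n \<le> 1"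
proof (cases "n \<ge> 1")
  case True
  have "2*real n / (2*n+1) \<le> 1" by simp
  moreover have "Q n \<ge> 0" by (simp add: Q_def)
  ultimately have "(2*real n / (2*n+1)) * Q n \<le> 1 * 1"
    using Q_le1[of n] by (intro mult_mono) auto
  then show ?thesis using D_eq[OF True] by simp
next
  case False then have "n = 0" by simp
  then show ?thesis by (simp add: D_def)
qed

lemma aux4: "(v::real) \<noteq> 0 \<Longrightarrow> Z \<noteq> 0 \<Longrightarrow> B * v = A * u \<Longrightarrow> A/Z*(u/v) = B/Z"
  by (simp add: field_simps)

lemma ratio_lim:
  "(\<lambda>n. real ((2*n-1) choose (n-1-j)) / real ((2*n-1) choose (n-1))) \<longlonglongrightarrow> 1"
proof (induction j)
  case 0
  show ?case
  proof (rule Lim_transform_eventually[OF tendsto_const[of 1]])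
    show "\<forall>\<^sub>F n in sequentially. 1 = real ((2*n-1) choose (n-1-0)) / real ((2*n-1) choose (n-1))"
      using eventually_ge_at_top[of "1::nat"]
    proof eventually_elim
      case (elim n)
      have "((2*n-1) choose (n-1)) > 0" using elim by simp
      then show ?case by simp
    qed
  qed
next
  case (Suc j)
  have "(\<lambda>n. real ((2*n-1) choose (n-1-j)) / real ((2*n-1) choose (n-1))
           * ((real n - 1 - j) / (real n + 1 + j))) \<longlonglongrightarrow> 1 * 1"
    by (intro tendsto_mult Suc.IH) real_asymp
  then have "(\<lambda>n. real ((2*n-1) choose (n-1-j)) / real ((2*n-1) choose (n-1))
           * ((real n - 1 - j) / (real n + 1 + j))) \<longlonglongrightarrow> 1" by simp
  then show ?case
  proof (rule Lim_transform_eventually)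
    show "\<forall>\<^sub>F n in sequentially. real ((2*n-1) choose (n-1-j)) / real ((2*n-1) choose (n-1))
           * ((real n - 1 - j) / (real n + 1 + j)) =
           real ((2*n-1) choose (n-1-Suc j)) / real ((2*n-1) choose (n-1))"
      using eventually_ge_at_top[of "j+2"]
    proof eventually_elim
      case (elim n)
      have l: "((2*n-1) choose (n-2-j)) * ((2*n-1) - (n-2-j)) = ((2*n-1) choose Suc (n-2-j)) * Suc (n-2-j)"
        by (rule l3)
      have eq: "(2*n-1) - (n-2-j) = n+1+j" "Suc (n-2-j) = n-1-j" "n-1-Suc j = n-2-j"
        using elim by auto
      from l have h0: "((2*n-1) choose (n-2-j)) * (n+1+j) = ((2*n-1) choose (n-1-j)) * (n-1-j)"
        unfolding eq(1,2) .
      have h: "((2*n-1) choose (n-1-Suc j)) * (n+1+j) = ((2*n-1) choose (n-1-j)) * (n-1-j)"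
        unfolding eq(3) by (rule h0)
      have d: "real (n-1-j) = real n - 1 - real j" using elim by (simp add: of_nat_diff)
      have e: "real ((2*n-1) choose (n-1-Suc j)) * (real n+1+real j) =
          real ((2*n-1) choose (n-1-j)) * (real n - 1 - real j)"
        using arg_cong[OF h, of real] unfolding d[symmetric] by (simp only: of_nat_mult of_nat_add of_nat_1)
      have p: "real ((2*n-1) choose (n-1)) \<noteq> 0" "real n + 1 + real j \<noteq> 0" using elim by auto
      show ?case by (rule aux4[OF p(2) p(1) e])
    qed
  qed
qed

lemma summ_aux: "b > (1::real) \<Longrightarrow> (\<lambda>k::nat. ln(2*real k+1) powr a / real k powr b) \<in> o(\<lambda>k. real k powr (-(1+b)/2))"
  by real_asymp

lemma T_bound:
  assumes "1 \<le> k" "k \<le> n"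
  shows "\<bar>2 / pi - real n / 2 ^ (4 * n - 2) * real ((2 * n) choose n) * real ((2 * n - 1) choose (n - k))\<bar> \<le> 1"
proof -
  define x where "x = real n / 2 ^ (4 * n - 2) * real ((2 * n) choose n) * real ((2 * n - 1) choose (n - k))"
  have "(2*n-1) choose (n-k) \<le> (2*n-1) choose ((2*n-1) div 2)" by (rule binomial_maximum)
  also have "(2*n-1) div 2 = n - 1" using assms by linarith
  finally have "real ((2*n-1) choose (n-k)) \<le> real ((2*n-1) choose (n-1))" by simp
  then have "x \<le> D n" unfolding x_def D_def
    by (intro mult_left_mono) auto
  then have x1: "x \<le> 1" using D_le1[of n] by simp
  have x0: "x \<ge> 0" unfolding x_def by simp
  have "2 / pi \<le> 1" "2/pi \<ge> 0" using pi_gt3 by (auto simp: divide_le_eq)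
  then have "\<bar>2/pi - x\<bar> \<le> 1" using x0 x1 by linarith
  then show ?thesis unfolding x_def .
qed

theorem lemma3p6:
  fixes a b C :: real and W :: "nat \<Rightarrow> real"
  assumes "b > 1" and "C > 0"
    and "\<And>k. k \<ge> 1 \<Longrightarrow> \<bar>W k\<bar> < C * ln (2 * real k + 1) powr a / real k powr b"
  shows "(\<lambda>n. \<Sum>k=1..n. \<bar>W k\<bar> * (2 / pi - real n / 2 ^ (4 * n - 2)
            * real ((2 * n) choose n) * real ((2 * n - 1) choose (n - k))))
         \<longlonglongrightarrow> 0"
proof -
  define T where "T n k = 2 / pi - real n / 2 ^ (4 * n - 2)
            * real ((2 * n) choose n) * real ((2 * n - 1) choose (n - k))" for n k :: nat
  define A where "A k n = (if 1 \<le> k \<and> k \<le> n then \<bar>W k\<bar> * T n k else 0)" for k n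
  have s1: "summable (\<lambda>k::nat. norm (real k powr (-(1+b)/2)))"
    using summable_real_powr_iff[of "-(1+b)/2"] assms(1) by simp
  have s2: "summable (\<lambda>k::nat. ln(2*real k+1) powr a / real k powr b)"
    by (rule summable_comparison_test_bigo[OF s1 landau_o.small_imp_big[OF summ_aux[OF assms(1)]]])
  have sW: "summable (\<lambda>k. \<bar>W k\<bar>)"
  proof (rule summable_comparison_test_ev[OF _ summable_mult[OF s2, of C]])
    show "\<forall>\<^sub>F k in sequentially. norm \<bar>W k\<bar> \<le> C * (ln (2 * real k + 1) powr a / real k powr b)"
      using eventually_ge_at_top[of "1::nat"]
    proof eventually_elim
      case (elim k)
      show ?case using assms(3)[OF elim] by simp
    qed
  qed
  have lim: "(\<lambda>n. A k n) \<longlonglongrightarrow> 0" for k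
  proof (cases "k \<ge> 1")
    case False
    then show ?thesis by (simp add: A_def)
  next
    case True
    have "(\<lambda>n. \<bar>W k\<bar> * (2/pi - D n * (real ((2*n-1) choose (n-1-(k-1))) / real ((2*n-1) choose (n-1)))))
           \<longlonglongrightarrow> \<bar>W k\<bar> * (2/pi - 2/pi * 1)"
      by (intro tendsto_intros D_lim ratio_lim)
    then have "(\<lambda>n. \<bar>W k\<bar> * (2/pi - D n * (real ((2*n-1) choose (n-1-(k-1))) / real ((2*n-1) choose (n-1)))))
           \<longlonglongrightarrow> 0" by simp
    then show ?thesis
    proof (rule Lim_transform_eventually)
      show "\<forall>\<^sub>F n in sequentially. \<bar>W k\<bar> * (2/pi - D n * (real ((2*n-1) choose (n-1-(k-1))) / real ((2*n-1) choose (n-1)))) = A k n"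
        using eventually_ge_at_top[of k]
      proof eventually_elim
        case (elim n)
        have p: "real ((2*n-1) choose (n-1)) \<noteq> 0" using elim True by simp
        have e: "n-1-(k-1) = n-k" using True by simp
        show ?case unfolding A_def T_def D_def e using elim True p by simp
      qed
    qed
  qed
  have bound: "\<forall>\<^sub>F (k,n) in at_top \<times>\<^sub>F sequentially. norm (A k n) \<le> \<bar>W k\<bar>"
  proof (intro always_eventually allI)
    fix kn :: "nat \<times> nat"
    obtain k n where kn: "kn = (k,n)" by fastforce
    have "norm (A k n) \<le> \<bar>W k\<bar>"
    proof (cases "1 \<le> k \<and> k \<le> n")
      case True
      then have "\<bar>T n k\<bar> \<le> 1" unfolding T_def using T_bound by blast
      then have "\<bar>W k\<bar> * \<bar>T n k\<bar> \<le> \<bar>W k\<bar> * 1" by (intro mult_left_mono) auto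
      then show ?thesis using True by (simp add: A_def abs_mult)
    qed (auto simp: A_def)
    then show "case kn of (k,n) \<Rightarrow> norm (A k n) \<le> \<bar>W k\<bar>" using kn by simp
  qed
  have "((\<lambda>n. suminf (\<lambda>k. A k n)) \<longlongrightarrow> suminf (\<lambda>k. 0::real)) sequentially"
    using tannerys_theorem[of A "\<lambda>_. 0" sequentially "\<lambda>k. \<bar>W k\<bar>", OF lim bound sW] by simp
  then have L: "(\<lambda>n. suminf (\<lambda>k. A k n)) \<longlonglongrightarrow> 0" by simp
  have "suminf (\<lambda>k. A k n) = (\<Sum>k=1..n. \<bar>W k\<bar> * T n k)" for n
  proof -
    have "suminf (\<lambda>k. A k n) = (\<Sum>k\<in>{1..n}. A k n)"
      by (rule suminf_finite) (auto simp: A_def)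
    also have "\<dots> = (\<Sum>k=1..n. \<bar>W k\<bar> * T n k)"
      by (rule sum.cong) (auto simp: A_def)
    finally show ?thesis .
  qed
  then show ?thesis using L unfolding T_def by simp
qed

end
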